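(* Let $V$ be a finite set with nonnegative symmetric similarity scores $w_{ij}$ ($i\ne j$) satisfying the triangle inequality $w_{ij}\le w_{ik}+w_{kj}$ for all distinct $i,j,k\in V$. For a rooted binary tree $T$ whose leaves are in bijection with $V$, let $cost_T(V)=\sum_{\{i,j\}\subseteq V}w_{ij}\,|\mathrm{leaves}(T[i\vee j])|$. Then for every such tree $T$, $cost_T(V)\le 2\min_{T'}cost_{T'}(V)$, the minimum being over all such trees $T'$.
   Context: $T[i\vee j]$ denotes the subtree of $T$ rooted at the least common ancestor of the leaves $i$ and $j$, and $|\mathrm{leaves}(T[i\vee j])|$ is its number of leaves. The sum is over unordered pairs of distinct elements. *)

theory Defs
  imports Complex_Main
begin

datatype 'a bintree = Leaf 'a | Node "'a bintree" "'a bintree"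

fun leaves :: "'a bintree \<Rightarrow> 'a list" where
  "leaves (Leaf x) = [x]"
| "leaves (Node l r) = leaves l @ leaves r"

definition tree_on :: "'a bintree \<Rightarrow> 'a set \<Rightarrow> bool" where
  "tree_on T V \<longleftrightarrow> distinct (leaves T) \<and> set (leaves T) = V"

fun lca_subtree :: "'a bintree \<Rightarrow> 'a \<Rightarrow> 'a \<Rightarrow> 'a bintree" where
  "lca_subtree (Leaf x) i j = Leaf x"
| "lca_subtree (Node l r) i j =
     (if i \<in> set (leaves l) \<and> j \<in> set (leaves l) then lca_subtree l i j
      else if i \<in> set (leaves r) \<and> j \<in> set (leaves r) then lca_subtree r i j
      else Node l r)"

text \<open>An unordered pair e = {i,j} contributes the term for
  (i,j) with i,j its two elements (both summands are symmetric in i,j on a tree_on tree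
  when w is symmetric; we pick an ordering via SOME).\<close>
definition pair_term :: "('a \<Rightarrow> 'a \<Rightarrow> real) \<Rightarrow> 'a bintree \<Rightarrow> 'a set \<Rightarrow> real" where
  "pair_term w T e = (SOME c. \<exists>i j. e = {i, j} \<and> i \<noteq> j \<and>
        c = w i j * real (length (leaves (lca_subtree T i j))))"

definition cost :: "('a \<Rightarrow> 'a \<Rightarrow> real) \<Rightarrow> 'a bintree \<Rightarrow> 'a set \<Rightarrow> real" where
  "cost w T V = (\<Sum>e\<in>{e. e \<subseteq> V \<and> card e = 2}. pair_term w T e)"

end

theory Submission
  imports Defs
begin

lemma lca_sym: "lca_subtree T i j = lca_subtree T j i"
  by (induction T) (auto simp: conj_commute)

lemma lca_sub: "set (leaves (lca_subtree T i j)) \<subseteq> set (leaves T)"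
  by (induction T) auto

lemma lca_mem: "i \<in> set (leaves T) \<Longrightarrow> j \<in> set (leaves T) \<Longrightarrow>
   i \<in> set (leaves (lca_subtree T i j)) \<and> j \<in> set (leaves (lca_subtree T i j))"
  by (induction T) auto

lemma lca_distinct: "distinct (leaves T) \<Longrightarrow> distinct (leaves (lca_subtree T i j))"
  by (induction T) auto

lemma lca_triple:
  assumes "distinct (leaves T)" "i \<in> set (leaves T)" "j \<in> set (leaves T)" "k \<in> set (leaves T)"
    "i \<noteq> j" "i \<noteq> k" "j \<noteq> k"
  shows "(k \<in> set (leaves (lca_subtree T i j)) \<and> j \<in> set (leaves (lca_subtree T i k)))
       \<or> (k \<in> set (leaves (lca_subtree T i j)) \<and> i \<in> set (leaves (lca_subtree T j k)))
       \<or> (j \<in> set (leaves (lca_subtree T i k)) \<and> i \<in> set (leaves (lca_subtree T j k)))"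
  using assms
proof (induction T)
  case (Leaf x) then show ?case by simp
next
  case (Node l r)
  have d: "set (leaves l) \<inter> set (leaves r) = {}" "distinct (leaves l)" "distinct (leaves r)"
    using Node.prems(1) by auto
  have s1: "\<And>a b. set (leaves (lca_subtree l a b)) \<subseteq> set (leaves l)" by (rule lca_sub)
  have s2: "\<And>a b. set (leaves (lca_subtree r a b)) \<subseteq> set (leaves r)" by (rule lca_sub)
  show ?case
    using Node.prems d s1 s2 Node.IH
    apply (cases "i \<in> set (leaves l)"; cases "j \<in> set (leaves l)"; cases "k \<in> set (leaves l)")
    by (auto simp del: Un_iff)
qed

definition fT :: "('a \<Rightarrow> 'a \<Rightarrow> real) \<Rightarrow> 'a bintree \<Rightarrow> 'a \<Rightarrow> 'a \<Rightarrow> 'a \<Rightarrow> real" where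
  "fT w T i j k = (if i \<noteq> j \<and> k \<in> set (leaves (lca_subtree T i j)) then w i j else 0)"

definition DD :: "('a \<Rightarrow> 'a \<Rightarrow> real) \<Rightarrow> 'a bintree \<Rightarrow> 'a set \<Rightarrow> real" where
  "DD w T V = (\<Sum>i\<in>V. \<Sum>j\<in>V. \<Sum>k\<in>V. fT w T i j k)"

lemma G_bound:
  assumes T: "tree_on T V" and T': "tree_on T' V"
    and nn: "\<And>i j. i \<in> V \<Longrightarrow> j \<in> V \<Longrightarrow> i \<noteq> j \<Longrightarrow> w i j \<ge> 0"
    and sy: "\<And>i j. i \<in> V \<Longrightarrow> j \<in> V \<Longrightarrow> i \<noteq> j \<Longrightarrow> w i j = w j i"
    and tr: "\<And>i j k. i \<in> V \<Longrightarrow> j \<in> V \<Longrightarrow> k \<in> V \<Longrightarrow> i \<noteq> j \<Longrightarrow> i \<noteq> k \<Longrightarrow> j \<noteq> k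
           \<Longrightarrow> w i j \<le> w i k + w k j"
    and V: "i \<in> V" "j \<in> V" "k \<in> V"
  shows "fT w T i j k + fT w T i k j + fT w T j k i
         \<le> 2 * (fT w T' i j k + fT w T' i k j + fT w T' j k i)"
proof -
  have mT: "a \<in> set (leaves (lca_subtree X a b)) \<and> b \<in> set (leaves (lca_subtree X a b))"
    if "tree_on X V" "a \<in> V" "b \<in> V" for X a b
    using lca_mem[of a X b] that unfolding tree_on_def by auto
  have fTa: "fT w X a b a = (if a \<noteq> b then w a b else 0)"
    if "tree_on X V" "a \<in> V" "b \<in> V" for X a b
    using mT[OF that] unfolding fT_def by auto
  have fTb: "fT w X a b b = (if a \<noteq> b then w a b else 0)"
    if "tree_on X V" "a \<in> V" "b \<in> V" for X a b
    using mT[OF that] unfolding fT_def by auto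
  have fTc: "fT w X a a b = 0" for X a b unfolding fT_def by auto
  have fTa': "fT w T' a b a = (if a \<noteq> b then w a b else 0)" "fT w T a b a = (if a \<noteq> b then w a b else 0)"
    if "a \<in> V" "b \<in> V" for a b using fTa[OF T' that] fTa[OF T that] by auto
  have fTb': "fT w T' a b b = (if a \<noteq> b then w a b else 0)" "fT w T a b b = (if a \<noteq> b then w a b else 0)"
    if "a \<in> V" "b \<in> V" for a b using fTb[OF T' that] fTb[OF T that] by auto
  show ?thesis
  proof (cases "i \<noteq> j \<and> i \<noteq> k \<and> j \<noteq> k")
    case True
    have up: "fT w T i j k + fT w T i k j + fT w T j k i \<le> w i j + w i k + w j k"
      using nn V True unfolding fT_def by auto
    have t1: "w i j \<le> w i k + w j k" using tr[of i j k] sy[of k j] V True by auto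
    have t2: "w i k \<le> w i j + w j k" using tr[of i k j] sy[of j k] V True by auto
    have t3: "w j k \<le> w i j + w i k" using tr[of j k i] sy[of j i] V True by auto
    have "(k \<in> set (leaves (lca_subtree T' i j)) \<and> j \<in> set (leaves (lca_subtree T' i k)))
       \<or> (k \<in> set (leaves (lca_subtree T' i j)) \<and> i \<in> set (leaves (lca_subtree T' j k)))
       \<or> (j \<in> set (leaves (lca_subtree T' i k)) \<and> i \<in> set (leaves (lca_subtree T' j k)))"
      using lca_triple[of T' i j k] T' V True unfolding tree_on_def by auto
    then have "w i j + w i k + w j k \<le> 2 * (fT w T' i j k + fT w T' i k j + fT w T' j k i)"
      using True t1 t2 t3 nn V unfolding fT_def by auto
    with up show ?thesis by linarith
  next
    case False
    then consider "i = j" | "i = k" | "j = k" by blast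
    then show ?thesis
    proof cases
      case 1 then show ?thesis using V nn[of i k] by (auto simp: fTc fTa' fTb')
    next
      case 2 then show ?thesis using V nn[of i j] sy[of i j] by (auto simp: fTc fTa' fTb')
    next
      case 3 then show ?thesis using V nn[of i j] by (auto simp: fTc fTa' fTb')
    qed
  qed
qed

lemma DD_bound:
  assumes fin: "finite V" and T: "tree_on T V" and T': "tree_on T' V"
    and nn: "\<And>i j. i \<in> V \<Longrightarrow> j \<in> V \<Longrightarrow> i \<noteq> j \<Longrightarrow> w i j \<ge> 0"
    and sy: "\<And>i j. i \<in> V \<Longrightarrow> j \<in> V \<Longrightarrow> i \<noteq> j \<Longrightarrow> w i j = w j i"
    and tr: "\<And>i j k. i \<in> V \<Longrightarrow> j \<in> V \<Longrightarrow> k \<in> V \<Longrightarrow> i \<noteq> j \<Longrightarrow> i \<noteq> k \<Longrightarrow> j \<noteq> k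
           \<Longrightarrow> w i j \<le> w i k + w k j"
  shows "DD w T V \<le> 2 * DD w T' V"
proof -
  have r1: "\<And>X. (\<Sum>i\<in>V. \<Sum>j\<in>V. \<Sum>k\<in>V. fT w X i k j) = DD w X V"
    unfolding DD_def by (rule sum.cong[OF refl], rule sum.swap)
  have r2: "\<And>X. (\<Sum>i\<in>V. \<Sum>j\<in>V. \<Sum>k\<in>V. fT w X j k i) = DD w X V"
  proof -
    fix X
    have "(\<Sum>i\<in>V. \<Sum>j\<in>V. \<Sum>k\<in>V. fT w X j k i) = (\<Sum>j\<in>V. \<Sum>i\<in>V. \<Sum>k\<in>V. fT w X j k i)"
      by (rule sum.swap)
    also have "\<dots> = (\<Sum>j\<in>V. \<Sum>k\<in>V. \<Sum>i\<in>V. fT w X j k i)"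
      by (rule sum.cong[OF refl], rule sum.swap)
    finally show "?thesis X" unfolding DD_def .
  qed
  have e: "\<And>X. 3 * DD w X V = (\<Sum>i\<in>V. \<Sum>j\<in>V. \<Sum>k\<in>V. fT w X i j k + fT w X i k j + fT w X j k i)"
    using r1 r2 unfolding DD_def by (simp add: sum.distrib)
  have m: "(\<Sum>i\<in>V. \<Sum>j\<in>V. \<Sum>k\<in>V. fT w T i j k + fT w T i k j + fT w T j k i)
     \<le> (\<Sum>i\<in>V. \<Sum>j\<in>V. \<Sum>k\<in>V. 2 * (fT w T' i j k + fT w T' i k j + fT w T' j k i))"
    by (intro sum_mono G_bound[OF T T' nn sy tr]) auto
  have q: "(\<Sum>i\<in>V. \<Sum>j\<in>V. \<Sum>k\<in>V. 2 * (fT w T' i j k + fT w T' i k j + fT w T' j k i))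
      = 2 * (\<Sum>i\<in>V. \<Sum>j\<in>V. \<Sum>k\<in>V. fT w T' i j k + fT w T' i k j + fT w T' j k i)"
    by (simp add: sum_distrib_left)
  show ?thesis using e[of T] e[of T'] m q by linarith
qed


lemma pair_term_eq:
  assumes sy: "\<And>i j. i \<in> V \<Longrightarrow> j \<in> V \<Longrightarrow> i \<noteq> j \<Longrightarrow> w i j = w j i"
    and ab: "a \<in> V" "b \<in> V" "a \<noteq> b"
  shows "pair_term w T {a,b} = w a b * real (length (leaves (lca_subtree T a b)))"
  unfolding pair_term_def
proof (rule some_equality)
  show "\<exists>i j. {a,b} = {i,j} \<and> i \<noteq> j \<and> w a b * real (length (leaves (lca_subtree T a b)))
      = w i j * real (length (leaves (lca_subtree T i j)))" using ab by blast
next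
  fix c assume "\<exists>i j. {a, b} = {i, j} \<and> i \<noteq> j \<and> c = w i j * real (length (leaves (lca_subtree T i j)))"
  then obtain i j where "{a,b}={i,j}" "i\<noteq>j" "c = w i j * real (length (leaves (lca_subtree T i j)))" by blast
  then show "c = w a b * real (length (leaves (lca_subtree T a b)))"
    using sy[of a b] ab by (auto simp: doubleton_eq_iff lca_sym)
qed

lemma inner_k:
  assumes fin: "finite V" and T: "tree_on T V" and ij: "i \<in> V" "j \<in> V"
  shows "(\<Sum>k\<in>V. fT w T i j k) = (if i \<noteq> j then w i j * real (length (leaves (lca_subtree T i j))) else 0)"
proof (cases "i = j")
  case True then show ?thesis by (simp add: fT_def)
next
  case False
  let ?S = "set (leaves (lca_subtree T i j))"
  have sub: "?S \<subseteq> V" using lca_sub[of T i j] T unfolding tree_on_def by auto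
  have len: "length (leaves (lca_subtree T i j)) = card ?S"
    using lca_distinct T unfolding tree_on_def by (metis distinct_card)
  have "(\<Sum>k\<in>V. fT w T i j k) = (\<Sum>k\<in>V. if k \<in> ?S then w i j else 0)"
    using False by (simp add: fT_def)
  also have "\<dots> = (\<Sum>k\<in>V \<inter> ?S. w i j)" using sum.inter_restrict[OF fin, of "\<lambda>k. w i j" ?S] by simp
  also have "V \<inter> ?S = ?S" using sub by blast
  finally show ?thesis using False len by simp
qed

lemma pairs_sum:
  assumes fin: "finite V"
    and sy: "\<And>i j. i \<in> V \<Longrightarrow> j \<in> V \<Longrightarrow> i \<noteq> j \<Longrightarrow> w i j = w j i"
  shows "(\<Sum>i\<in>V. \<Sum>j\<in>V. if i \<noteq> j then w i j * real (length (leaves (lca_subtree T i j))) else 0)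
     = 2 * cost w T V"
proof -
  define h where "h = (\<lambda>i j. w i j * real (length (leaves (lca_subtree T i j))))"
  define P where "P = {p \<in> V \<times> V. fst p \<noteq> snd p}"
  define E where "E = {e. e \<subseteq> V \<and> card e = 2}"
  define g where "g = (\<lambda>p::'a\<times>'a. {fst p, snd p})"
  have finE: "finite E" unfolding E_def using fin by (auto intro: finite_subset[of _ "Pow V"])
  have finP: "finite P" unfolding P_def using fin by auto
  have "(\<Sum>i\<in>V. \<Sum>j\<in>V. if i \<noteq> j then h i j else 0)
      = (\<Sum>p\<in>V\<times>V. if fst p \<noteq> snd p then h (fst p) (snd p) else 0)"
    by (simp add: sum.cartesian_product case_prod_beta)
  also have "\<dots> = (\<Sum>p\<in>P. h (fst p) (snd p))"
    unfolding P_def using fin by (simp add: sum.inter_filter)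
  also have "\<dots> = (\<Sum>e\<in>E. \<Sum>p\<in>{p. p \<in> P \<and> g p = e}. h (fst p) (snd p))"
    by (rule sum.group[symmetric, OF finP finE]) (auto simp: P_def E_def g_def card_2_iff)
  also have "\<dots> = (\<Sum>e\<in>E. 2 * pair_term w T e)"
  proof (rule sum.cong[OF refl])
    fix e assume "e \<in> E"
    then obtain a b where e: "e = {a,b}" "a \<noteq> b" "a \<in> V" "b \<in> V"
      unfolding E_def by (auto simp: card_2_iff)
    have "{p. p \<in> P \<and> g p = e} = {(a,b),(b,a)}"
      using e unfolding P_def g_def by (auto simp: doubleton_eq_iff)
    then have "(\<Sum>p\<in>{p. p \<in> P \<and> g p = e}. h (fst p) (snd p)) = h a b + h b a"
      using e by simp
    also have "\<dots> = 2 * h a b" using sy[of a b] e by (simp add: h_def lca_sym)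
    also have "\<dots> = 2 * pair_term w T e" using pair_term_eq[OF sy e(3,4,2)] e by (simp add: h_def)
    finally show "(\<Sum>p\<in>{p. p \<in> P \<and> g p = e}. h (fst p) (snd p)) = 2 * pair_term w T e" .
  qed
  also have "\<dots> = 2 * cost w T V" unfolding cost_def E_def by (simp add: sum_distrib_left)
  finally show ?thesis unfolding h_def .
qed

lemma cost_DD:
  assumes fin: "finite V" and T: "tree_on T V"
    and sy: "\<And>i j. i \<in> V \<Longrightarrow> j \<in> V \<Longrightarrow> i \<noteq> j \<Longrightarrow> w i j = w j i"
  shows "DD w T V = 2 * cost w T V"
  unfolding DD_def using inner_k[OF fin T] pairs_sum[OF fin sy, where T=T] by simp

lemma leaves_ne: "leaves T \<noteq> []" by (induction T) auto

lemma fin_trees: "finite V \<Longrightarrow> finite {T. set (leaves T) \<subseteq> V \<and> length (leaves T) \<le> n}"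
proof (induction n)
  case 0
  have "{T. set (leaves T) \<subseteq> V \<and> length (leaves T) \<le> 0} = {}" using leaves_ne by auto
  then show ?case by (metis finite.emptyI)
next
  case (Suc n)
  let ?S = "{T. set (leaves T) \<subseteq> V \<and> length (leaves T) \<le> n}"
  have "{T. set (leaves T) \<subseteq> V \<and> length (leaves T) \<le> Suc n} \<subseteq> Leaf ` V \<union> (\<lambda>(l,r). Node l r) ` (?S \<times> ?S)"
  proof
    fix T assume A: "T \<in> {T. set (leaves T) \<subseteq> V \<and> length (leaves T) \<le> Suc n}"
    show "T \<in> Leaf ` V \<union> (\<lambda>(l,r). Node l r) ` (?S \<times> ?S)"
    proof (cases T)
      case (Leaf x) with A show ?thesis by auto
    next
      case (Node l r)
      have "leaves l \<noteq> []" "leaves r \<noteq> []" using leaves_ne by auto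
      then have "length (leaves l) \<ge> 1" "length (leaves r) \<ge> 1"
        by (auto simp: Suc_le_eq)
      with Node A have "(l,r) \<in> ?S \<times> ?S" by auto
      then show ?thesis using Node by force
    qed
  qed
  moreover have "finite (Leaf ` V \<union> (\<lambda>(l,r). Node l r) ` (?S \<times> ?S))" using Suc by auto
  ultimately show ?case by (rule finite_subset)
qed

theorem mainTheorem14:
  fixes V :: "'a set" and w :: "'a \<Rightarrow> 'a \<Rightarrow> real" and T :: "'a bintree"
  assumes "finite V"
    and "\<And>i j. i \<in> V \<Longrightarrow> j \<in> V \<Longrightarrow> i \<noteq> j \<Longrightarrow> w i j \<ge> 0"
    and "\<And>i j. i \<in> V \<Longrightarrow> j \<in> V \<Longrightarrow> i \<noteq> j \<Longrightarrow> w i j = w j i"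
    and "\<And>i j k. i \<in> V \<Longrightarrow> j \<in> V \<Longrightarrow> k \<in> V \<Longrightarrow> i \<noteq> j \<Longrightarrow> i \<noteq> k \<Longrightarrow> j \<noteq> k
           \<Longrightarrow> w i j \<le> w i k + w k j"
    and "tree_on T V"
  shows "cost w T V \<le> 2 * Min {cost w T' V | T'. tree_on T' V}"
proof -
  let ?TS = "{T'. tree_on T' V}"
  have "?TS \<subseteq> {T. set (leaves T) \<subseteq> V \<and> length (leaves T) \<le> card V}"
    by (auto simp: tree_on_def distinct_card[symmetric])
  then have fin: "finite ?TS" using fin_trees[OF assms(1), of "card V"] finite_subset by blast
  have eq: "{cost w T' V | T'. tree_on T' V} = (\<lambda>T'. cost w T' V) ` ?TS" by auto
  have "Min {cost w T' V | T'. tree_on T' V} \<in> {cost w T' V | T'. tree_on T' V}"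
    unfolding eq using fin assms(5) by (intro Min_in) auto
  then obtain T' where T': "tree_on T' V" "Min {cost w T' V | T'. tree_on T' V} = cost w T' V" by auto
  have "DD w T V \<le> 2 * DD w T' V" by (rule DD_bound[OF assms(1) assms(5) T'(1) assms(2-4)])
  then show ?thesis using cost_DD[OF assms(1) assms(5) assms(3)] cost_DD[OF assms(1) T'(1) assms(3)] T'(2)
    by simp
qed

end
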